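(* Consider the error system with adaptive control $u_{\mathrm{adapt}}=-\hat W^\top\beta(e)$ and static update law $\hat W(t)=K\beta(e(t))B^\top Pe(t)$, where $K=\alpha K_{\mathrm b}$ with $\alpha>0$ and $0<K_{\mathrm b}\in\mathrm S^{n_\beta}$, and $0<P,Q\in\mathrm S^n$ satisfy $Q=-(A^\top P+PA)$. Assume $\mathscr b:=\inf_{x\in\mathbb R^n}\beta(x)^\top K_{\mathrm b}\beta(x)>0$ and $|\eta(t)|\le\eta^\star$ for all $t\ge0$. Let $\gamma\in[0,1)$ and $\mu>0$, and define $$r_{\mathrm e}=\sqrt{\frac{\lambda_{\max}(P)}{g(\alpha\mathscr b\gamma,Q,PB)\,\lambda_{\min}(P)}}\;\sqrt{\frac{W^\top K_{\mathrm b}^{-1}W+\frac{{\eta^\star}^2}{\mathscr b(1-\gamma)}}{\alpha}+\mu}.$$ Then for every closed-loop solution there exists $T_{\mathrm e}\ge0$ such that $\|e(t)\|\le r_{\mathrm e}$ for all $t\ge T_{\mathrm e}$.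
   Context: Error system: $\dot e=Ae+B(u_{\mathrm{adapt}}+W^\top\beta(e)+\eta)$ with $e(t)\in\mathbb R^n$, $A\in\mathbb R^{n\times n}$ Hurwitz, $B\in\mathbb R^n$, $\beta:\mathbb R^n\to\mathbb R^{n_\beta}$ known, $W\in\mathbb R^{n_\beta}$ unknown constant, $\eta(t)\in\mathbb R$; Assumption 1: there is a non-decreasing $\alpha_\beta:[0,\infty)\to[0,\infty)$ with $\|\beta(x)\|\le\alpha_\beta(\|x\|)$ for all $x$. Closed-loop solutions are assumed to exist on $[0,\infty)$. $\mathrm S^k$: real symmetric $k\times k$ matrices. $g(\phi,Q,v)=\lambda_{\min}(Q+\phi\,vv^\top)$. *)

theory Defs
  imports "HOL-Analysis.Analysis"
begin

definition sym_mat :: "real^'n^'n \<Rightarrow> bool" where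
  "sym_mat M \<longleftrightarrow> transpose M = M"

definition pos_def :: "real^'n^'n \<Rightarrow> bool" where
  "pos_def M \<longleftrightarrow> sym_mat M \<and> (\<forall>x. x \<noteq> 0 \<longrightarrow> x \<bullet> (M *v x) > 0)"

text \<open>Real eigenvalues of a real square matrix, and the extreme ones
  (used only for symmetric matrices, where all eigenvalues are real).\<close>
definition real_eigenvalues :: "real^'n^'n \<Rightarrow> real set" where
  "real_eigenvalues M = {l. \<exists>v. v \<noteq> 0 \<and> M *v v = l *\<^sub>R v}"

definition lambda_min :: "real^'n^'n \<Rightarrow> real" where
  "lambda_min M = Min (real_eigenvalues M)"

definition lambda_max :: "real^'n^'n \<Rightarrow> real" where
  "lambda_max M = Max (real_eigenvalues M)"

definition hurwitz :: "real^'n^'n \<Rightarrow> bool" where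
  "hurwitz A \<longleftrightarrow> (\<forall>(l::complex) (v::complex^'n). v \<noteq> 0 \<and>
      (\<chi> i j. complex_of_real (A $ i $ j)) *v v = l *s v \<longrightarrow> Re l < 0)"

definition outer :: "real^'n \<Rightarrow> real^'n \<Rightarrow> real^'n^'n" where
  "outer v w = (\<chi> i j. v $ i * w $ j)"

definition gfun :: "real \<Rightarrow> real^'n^'n \<Rightarrow> real^'n \<Rightarrow> real" where
  "gfun phi Q v = lambda_min (Q + phi *\<^sub>R outer v v)"

end

theory Submission
  imports Defs
begin


lemma sym_inner: assumes "sym_mat M" shows "x \<bullet> (M *v y) = (M *v x) \<bullet> (y::real^'n)"
proof -
  have "x \<bullet> (M *v y) = (x v* M) \<bullet> y" by (simp add: dot_lmul_matrix)
  also have "x v* M = transpose M *v x" by simp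
  also have "\<dots> = M *v x" using assms by (simp add: sym_mat_def)
  finally show ?thesis .
qed

lemma eig_fin: assumes "sym_mat M" shows "finite (real_eigenvalues (M::real^'n^'n))"
proof -
  define E where "E = real_eigenvalues M"
  define f where "f l = (SOME v. v \<noteq> 0 \<and> M *v v = l *\<^sub>R v)" for l
  have fP: "f l \<noteq> 0 \<and> M *v f l = l *\<^sub>R f l" if "l \<in> E" for l
    using that someI_ex[of "\<lambda>v. v \<noteq> 0 \<and> M *v v = l *\<^sub>R v"] unfolding E_def real_eigenvalues_def f_def by blast
  have orth: "f l1 \<bullet> f l2 = 0" if "l1 \<in> E" "l2 \<in> E" "l1 \<noteq> l2" for l1 l2
  proof -
    have "l2 * (f l1 \<bullet> f l2) = f l1 \<bullet> (M *v f l2)" using fP[OF that(2)] by simp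
    also have "\<dots> = (M *v f l1) \<bullet> f l2" by (rule sym_inner[OF assms])
    also have "\<dots> = l1 * (f l1 \<bullet> f l2)" using fP[OF that(1)] by simp
    finally show ?thesis using that(3) by simp
  qed
  have inj: "inj_on f E"
  proof (rule inj_onI)
    fix x y assume "x \<in> E" "y \<in> E" "f x = f y"
    then show "x = y" using orth[of x y] fP[of x] by auto
  qed
  have "pairwise orthogonal (f ` E)"
    unfolding pairwise_def orthogonal_def using orth by auto
  moreover have "0 \<notin> f ` E" using fP by auto
  ultimately have "independent (f ` E)" by (rule pairwise_orthogonal_independent)
  then have "finite (f ` E)" by (rule independent_imp_finite)
  then show ?thesis using inj finite_image_iff E_def by blast
qed

lemma sym_min_exists: assumes "sym_mat M"
  shows "\<exists>m\<in>real_eigenvalues (M::real^'n^'n). \<forall>y. m * (y \<bullet> y) \<le> y \<bullet> (M *v y)"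
proof -
  define q where "q y = y \<bullet> (M *v y)" for y :: "real^'n"
  have cont: "continuous_on (sphere 0 1) q" unfolding q_def
    by (intro continuous_intros linear_continuous_on matrix_vector_mul_linear_gen bounded_linear_inner_right) 
  have ne: "sphere (0::real^'n) 1 \<noteq> {}"
  proof -
    obtain i :: 'n where True by simp
    have "axis i (1::real) \<in> sphere 0 1" by simp
    then show ?thesis by blast
  qed
  obtain x0 where x0: "x0 \<in> sphere 0 1" "\<And>y. y \<in> sphere 0 1 \<Longrightarrow> q x0 \<le> q y"
    using continuous_attains_inf[OF compact_sphere ne cont] by blast
  define m where "m = q x0"
  have x0n: "x0 \<bullet> x0 = 1" using x0(1) by (simp add: dot_square_norm)
  have hom: "m * (y \<bullet> y) \<le> q y" for y
  proof (cases "y = 0")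
    case True then show ?thesis by (simp add: q_def)
  next
    case False
    define c where "c = 1 / norm y"
    have c: "c > 0" using False by (simp add: c_def)
    have "(c *\<^sub>R y) \<in> sphere 0 1" using False by (simp add: c_def)
    then have "m \<le> q (c *\<^sub>R y)" using x0 m_def by blast
    also have "q (c *\<^sub>R y) = c^2 * q y" by (simp add: q_def matrix_vector_mult_scaleR power2_eq_square)
    finally have "m \<le> c^2 * q y" .
    moreover have "c^2 * (y \<bullet> y) = 1" using False by (simp add: c_def dot_square_norm power_divide)
    ultimately have "m * (c^2 * (y \<bullet> y)) \<le> c^2 * q y" by simp
    then show ?thesis using c by (simp add: mult.left_commute)
  qed
  define z where "z = M *v x0 - m *\<^sub>R x0"
  define qn where "qn y = q y - m * (y \<bullet> y)" for y
  have qn0: "qn y \<ge> 0" for y using hom[of y] by (simp add: qn_def)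
  have qnx0: "qn x0 = 0" using x0n by (simp add: qn_def m_def)
  have expand: "qn (x0 + t *\<^sub>R y) = qn x0 + 2 * t * (y \<bullet> z) + t^2 * qn y" for t y
  proof -
    have s: "x0 \<bullet> (M *v y) = y \<bullet> (M *v x0)" using sym_inner[OF assms, of x0 y] by (simp add: inner_commute)
    show ?thesis unfolding qn_def q_def z_def
      by (simp add: matrix_vector_right_distrib matrix_vector_mult_scaleR inner_add_left inner_add_right
          inner_diff_right s algebra_simps power2_eq_square inner_commute[of x0 y])
  qed
  have "z = 0"
  proof -
    define a where "a = z \<bullet> z"
    define c where "c = qn z"
    have c0: "c \<ge> 0" using qn0 c_def by simp
    define t where "t = - a / (c + 1)"
    have "0 \<le> qn (x0 + t *\<^sub>R z)" by (rule qn0)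
    also have "\<dots> = 2 * t * a + t^2 * c" using expand qnx0 a_def c_def by simp
    finally have h: "0 \<le> 2 * t * a + t^2 * c" .
    have tc: "t * (c+1) = -a" using c0 unfolding t_def by simp
    have "(c+1)^2 * (2 * t * a + t^2 * c) = 2*a*(t*(c+1))*(c+1) + (t*(c+1))^2*c"
      by (simp add: algebra_simps power2_eq_square)
    also have "\<dots> = a^2 * (- c - 2)" unfolding tc by (simp add: algebra_simps power2_eq_square)
    finally have "(c+1)^2 * (2 * t * a + t^2 * c) = a^2 * (- c - 2)" .
    moreover have "(c+1)^2 * (2 * t * a + t^2 * c) \<ge> 0" using h by (intro mult_nonneg_nonneg) simp_all
    ultimately have p: "a^2 * (- c - 2) \<ge> 0" by linarith
    have n: "- c - 2 < 0" using c0 by linarith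
    have "a^2 \<le> 0" using p n by (simp add: zero_le_mult_iff)
    then have "a = 0" by simp
    then show ?thesis by (simp add: a_def)
  qed
  then have "M *v x0 = m *\<^sub>R x0" by (simp add: z_def)
  moreover have "x0 \<noteq> 0" using x0n by auto
  ultimately have "m \<in> real_eigenvalues M" unfolding real_eigenvalues_def by blast
  then show ?thesis using hom unfolding q_def by blast
qed

lemma eig_le: assumes "l \<in> real_eigenvalues M" and "\<forall>y. m * (y \<bullet> y) \<le> y \<bullet> ((M::real^'n^'n) *v y)"
  shows "m \<le> l"
proof -
  obtain v where v: "v \<noteq> 0" "M *v v = l *\<^sub>R v" using assms(1) unfolding real_eigenvalues_def by blast
  have "m * (v \<bullet> v) \<le> l * (v \<bullet> v)" using assms(2)[rule_format, of v] v by simp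
  moreover have "v \<bullet> v > 0" using v by simp
  ultimately show ?thesis by simp
qed

lemma lambda_min_prop: assumes "sym_mat M"
  shows "lambda_min M \<in> real_eigenvalues M \<and> (\<forall>y. lambda_min M * (y \<bullet> y) \<le> y \<bullet> ((M::real^'n^'n) *v y))"
proof -
  obtain m where m: "m \<in> real_eigenvalues M" "\<forall>y. m * (y \<bullet> y) \<le> y \<bullet> (M *v y)"
    using sym_min_exists[OF assms] by blast
  have "lambda_min M = m" unfolding lambda_min_def
    using eig_fin[OF assms] m eig_le[OF _ m(2)] by (intro Min_eqI) auto
  then show ?thesis using m by simp
qed

lemma lambda_max_prop: assumes "sym_mat M"
  shows "lambda_max M \<in> real_eigenvalues M \<and> (\<forall>y. y \<bullet> ((M::real^'n^'n) *v y) \<le> lambda_max M * (y \<bullet> y))"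
proof -
  have tn: "transpose (-M) = - transpose M"
    by (simp only: vec_eq_iff, intro allI) (simp add: transpose_def)
  have sm: "sym_mat (-M)" using assms tn by (simp add: sym_mat_def)
  obtain m where m: "m \<in> real_eigenvalues (-M)" "\<forall>y. m * (y \<bullet> y) \<le> y \<bullet> ((-M) *v y)"
    using sym_min_exists[OF sm] by blast
  have neg: "(-M) *v y = - (M *v y)" for y
    by (simp only: vec_eq_iff, rule allI) (simp add: matrix_vector_mult_def sum_negf)
  have m1: "-m \<in> real_eigenvalues M"
  proof -
    obtain v where v: "v \<noteq> 0" "(-M) *v v = m *\<^sub>R v" using m(1) unfolding real_eigenvalues_def by blast
    have "- (M *v v) = m *\<^sub>R v" using v(2) neg[of v] by simp
    then have "M *v v = - (m *\<^sub>R v)" by (metis minus_minus)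
    then have "M *v v = (-m) *\<^sub>R v" by simp
    then show ?thesis using v(1) unfolding real_eigenvalues_def by blast
  qed
  have m2: "\<forall>y. y \<bullet> (M *v y) \<le> (-m) * (y \<bullet> y)"
  proof
    fix y
    have "m * (y \<bullet> y) \<le> - (y \<bullet> (M *v y))" using m(2) unfolding neg inner_minus_right by blast
    then show "y \<bullet> (M *v y) \<le> (-m) * (y \<bullet> y)" by linarith
  qed
  have m3: "l \<le> -m" if lE: "l \<in> real_eigenvalues M" for l
  proof -
    obtain v where v: "v \<noteq> 0" "M *v v = l *\<^sub>R v" using lE unfolding real_eigenvalues_def by blast
    have "l * (v \<bullet> v) \<le> (-m) * (v \<bullet> v)" using m2[rule_format, of v] v by simp
    moreover have "v \<bullet> v > 0" using v by simp
    ultimately show ?thesis using mult_right_le_imp_le by blast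
  qed
  have "lambda_max M = -m" unfolding lambda_max_def
    using eig_fin[OF assms] m1 m3 by (intro Max_eqI) auto
  then show ?thesis using conjI[OF m1 m2] by simp
qed

lemma pos_eig: assumes "pos_def M" "l \<in> real_eigenvalues (M::real^'n^'n)" shows "l > 0"
proof -
  obtain v where v: "v \<noteq> 0" "M *v v = l *\<^sub>R v" using assms(2) unfolding real_eigenvalues_def by blast
  have "v \<bullet> (M *v v) > 0" using assms(1) v unfolding pos_def_def by blast
  then have "l * (v \<bullet> v) > 0" using v by simp
  moreover have "v \<bullet> v > 0" using v by simp
  ultimately show ?thesis by (simp add: zero_less_mult_iff)
qed



lemma mvt_within0:
  fixes V Vd :: "real \<Rightarrow> real"
  assumes der: "\<forall>t\<ge>0. (V has_field_derivative Vd t) (at t within {0..})"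
    and ab: "0 \<le> a" "a < b"
  shows "\<exists>x\<in>{a<..<b}. V b - V a = Vd x * (b - a)"
proof -
  have "\<exists>x\<in>{a<..<b}. V b - V a = (\<lambda>h. Vd x * h) (b - a)"
  proof (rule mvt_simple[OF ab(2)])
    fix x assume x: "a \<le> x" "x \<le> b"
    have "(V has_field_derivative Vd x) (at x within {0..})" using der x ab by auto
    then have "(V has_field_derivative Vd x) (at x within {a..b})"
      by (rule has_field_derivative_subset) (use ab in auto)
    then show "(V has_derivative (\<lambda>h. Vd x * h)) (at x within {a..b})"
      by (simp add: has_field_derivative_def)
  qed
  then show ?thesis by simp
qed

lemma comparison:
  fixes V Vd :: "real \<Rightarrow> real"
  assumes der: "\<forall>t\<ge>0. (V has_field_derivative Vd t) (at t within {0..})"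
    and dec: "\<forall>t\<ge>0. V t > Vs \<longrightarrow> Vd t \<le> - \<mu>" and mu: "\<mu> > 0"
  shows "\<exists>T\<ge>0. \<forall>t\<ge>T. V t \<le> Vs"
proof -
  have cont: "continuous_on {0..} V"
    unfolding continuous_on_eq_continuous_within
    using der DERIV_continuous by (metis atLeast_iff)
  have "\<exists>t0\<ge>0. V t0 \<le> Vs"
  proof (rule ccontr)
    assume "\<not> ?thesis"
    then have all: "\<forall>t\<ge>0. V t > Vs" by auto
    define T0 where "T0 = \<bar>V 0 - Vs\<bar> / \<mu> + 1"
    have T0: "T0 > 0" unfolding T0_def using mu by (simp add: add_nonneg_pos)
    obtain x where x: "x \<in> {0<..<T0}" "V T0 - V 0 = Vd x * (T0 - 0)"
      using mvt_within0[OF der order.refl T0] by blast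
    have "Vd x \<le> -\<mu>" using dec all x(1) by auto
    then have "Vd x * T0 \<le> -\<mu> * T0" using T0 by (intro mult_right_mono) auto
    also have "-\<mu> * T0 = - \<bar>V 0 - Vs\<bar> - \<mu>" unfolding T0_def using mu by (simp add: field_simps)
    finally have "V T0 \<le> V 0 - \<bar>V 0 - Vs\<bar> - \<mu>" using x(2) by simp
    then have "V T0 < Vs" using mu by linarith
    moreover have "V T0 > Vs" using all T0 by simp
    ultimately show False by simp
  qed
  then obtain t0 where t0: "t0 \<ge> 0" "V t0 \<le> Vs" by blast
  have "V t1 \<le> Vs" if t1: "t1 \<ge> t0" for t1
  proof (rule ccontr)
    assume bad: "\<not> V t1 \<le> Vs"
    then have lt: "t0 < t1" using t1 t0 by (cases "t1 = t0") auto
    define S where "S = {t0..t1} \<inter> V -` {..Vs}"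
    have cS: "closed S" unfolding S_def
      by (rule continuous_closed_preimage) (use cont t0 in \<open>auto intro: continuous_on_subset\<close>)
    have "t0 \<in> S" using t0 lt unfolding S_def by auto
    then have neS: "S \<noteq> {}" by blast
    have bS: "bdd_above S" unfolding S_def by (rule bdd_aboveI[of _ t1]) auto
    define s where "s = Sup S"
    have sS: "s \<in> S" unfolding s_def by (rule closed_contains_Sup[OF neS bS cS])
    then have s: "t0 \<le> s" "s \<le> t1" "V s \<le> Vs" unfolding S_def by auto
    have slt: "s < t1" using s bad by (cases "s = t1") auto
    have above: "V x > Vs" if "x \<in> {s<..<t1}" for x
    proof (rule ccontr)
      assume "\<not> V x > Vs"
      then have "x \<in> S" using that s unfolding S_def by auto
      then have "x \<le> s" unfolding s_def using bS by (rule cSup_upper)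
      then show False using that by auto
    qed
    obtain x where x: "x \<in> {s<..<t1}" "V t1 - V s = Vd x * (t1 - s)"
      using mvt_within0[OF der _ slt] s t0 by auto
    have "Vd x \<le> -\<mu>" using dec above[OF x(1)] x(1) s t0 by auto
    then have "Vd x * (t1 - s) \<le> -\<mu> * (t1 - s)" using slt by (intro mult_right_mono) auto
    also have "\<dots> < 0" using mu slt by (simp add: mult_pos_pos)
    finally have "V t1 < V s" using x(2) by simp
    then show False using s bad by simp
  qed
  then show ?thesis using t0 by blast
qed



lemma outer_mult: "outer v w *v y = (w \<bullet> y) *\<^sub>R (v::real^'n)"
  by (simp only: vec_eq_iff, rule allI)
     (simp add: outer_def matrix_vector_mult_def inner_vec_def sum_distrib_left mult_ac)

lemma mat_scale: "((c::real) *\<^sub>R (A::real^'n^'m)) *v x = c *\<^sub>R (A *v x)"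
  by (simp only: vec_eq_iff, rule allI)
     (simp add: matrix_vector_mult_def sum_distrib_left mult_ac)

lemma mat_neg: "(- (A::real^'n^'m)) *v x = - (A *v x)"
  by (simp only: vec_eq_iff, rule allI) (simp add: matrix_vector_mult_def sum_negf)

lemma sym_Mg: assumes "sym_mat (Q::real^'n^'n)" shows "sym_mat (Q + c *\<^sub>R outer v v)"
proof -
  have q: "Q $ j $ i = Q $ i $ j" for i j
    using arg_cong[OF assms[unfolded sym_mat_def], of "\<lambda>M. M $ i $ j"] by (simp add: transpose_def)
  show ?thesis unfolding sym_mat_def
    by (simp only: vec_eq_iff, intro allI) (simp add: transpose_def outer_def q mult.commute)
qed

lemma pos_nonneg: assumes "pos_def M" shows "0 \<le> x \<bullet> ((M::real^'n^'n) *v x)"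
  using assms unfolding pos_def_def by (cases "x = 0") (auto intro: less_imp_le)

lemma inv_mult: assumes "pos_def (K::real^'n^'n)" shows "K *v (matrix_inv K *v w) = w"
proof -
  have "\<forall>x. K *v x = 0 \<longrightarrow> x = 0"
  proof (intro allI impI)
    fix x assume "K *v x = 0"
    then have "x \<bullet> (K *v x) = 0" by simp
    then show "x = 0" using assms unfolding pos_def_def by force
  qed
  then have "\<exists>B. B ** K = mat 1" by (simp add: matrix_left_invertible_ker)
  then have "invertible K" by (simp add: invertible_left_inverse)
  then have "\<exists>A'. K ** A' = mat 1 \<and> A' ** K = mat 1" unfolding invertible_def .
  then have "K ** matrix_inv K = mat 1" unfolding matrix_inv_def by (rule someI_ex[THEN conjunct1])
  then show ?thesis by (simp add: matrix_vector_mul_assoc)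
qed

lemma lyap_id: assumes "sym_mat P" "Q = - (transpose A ** P + P ** A)"
  shows "x \<bullet> (Q *v x) = - 2 * (x \<bullet> (P *v (A *v (x::real^'n))))"
proof -
  have "x \<bullet> (transpose A *v (P *v x)) = (x v* transpose A) \<bullet> (P *v x)" by (rule dot_lmul_matrix[symmetric])
  also have "x v* transpose A = A *v x" by (metis transpose_matrix_vector transpose_transpose)
  also have "(A *v x) \<bullet> (P *v x) = x \<bullet> (P *v (A *v x))"
    using sym_inner[OF assms(1), of x "A *v x"] by (simp add: inner_commute)
  finally have h: "x \<bullet> (transpose A *v (P *v x)) = x \<bullet> (P *v (A *v x))" .
  have "Q *v x = - ((transpose A *v (P *v x)) + (P *v (A *v x)))"
    unfolding assms(2) mat_neg matrix_vector_mult_add_rdistrib matrix_vector_mul_assoc ..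
  then show ?thesis using h by (simp only: inner_minus_right inner_add_right)
qed



theorem mainTheorem4:
  fixes A P Q :: "real^'n^'n" and B :: "real^'n"
    and Kb :: "real^'m^'m" and W :: "real^'m"
    and \<beta> :: "real^'n \<Rightarrow> real^'m" and \<alpha>\<^sub>\<beta> :: "real \<Rightarrow> real"
    and \<eta> :: "real \<Rightarrow> real" and \<eta>s \<alpha> \<gamma> \<mu> :: real
    and e :: "real \<Rightarrow> real^'n" and u :: "real \<Rightarrow> real" and What :: "real \<Rightarrow> real^'m"
  assumes hurwitz: "hurwitz A"
    and ass1_mono: "mono_on {0..} \<alpha>\<^sub>\<beta>" and ass1_nonneg: "\<forall>r\<ge>0. \<alpha>\<^sub>\<beta> r \<ge> 0"
    and ass1: "\<forall>x. norm (\<beta> x) \<le> \<alpha>\<^sub>\<beta> (norm x)"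
    and alpha_pos: "\<alpha> > 0" and Kb_pd: "pos_def Kb"
    and P_pd: "pos_def P" and Q_pd: "pos_def Q"
    and lyap: "Q = - (transpose A ** P + P ** A)"
    and b_pos: "(INF x. \<beta> x \<bullet> (Kb *v \<beta> x)) > 0"
    and eta_bd: "\<forall>t\<ge>0. \<bar>\<eta> t\<bar> \<le> \<eta>s"
    and gamma: "0 \<le> \<gamma>" "\<gamma> < 1" and mu: "\<mu> > 0"
    and update: "\<forall>t\<ge>0. What t = (B \<bullet> (P *v e t)) *\<^sub>R ((\<alpha> *\<^sub>R Kb) *v \<beta> (e t))"
    and control: "\<forall>t\<ge>0. u t = - (What t \<bullet> \<beta> (e t))"
    and sol: "\<forall>t\<ge>0. (e has_vector_derivative
                 (A *v e t + (u t + W \<bullet> \<beta> (e t) + \<eta> t) *\<^sub>R B)) (at t within {0..})"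
  shows "let b = (INF x. \<beta> x \<bullet> (Kb *v \<beta> x));
             r = sqrt (lambda_max P / (gfun (\<alpha> * b * \<gamma>) Q (P *v B) * lambda_min P))
               * sqrt ((W \<bullet> (matrix_inv Kb *v W) + \<eta>s\<^sup>2 / (b * (1 - \<gamma>))) / \<alpha> + \<mu>)
         in \<exists>Te\<ge>0. \<forall>t\<ge>Te. norm (e t) \<le> r"
proof -
  define b where "b = (INF x. \<beta> x \<bullet> (Kb *v \<beta> x))"
  have bpos: "b > 0" using b_pos b_def by simp
  define phi where "phi = \<alpha> * b * \<gamma>"
  have phi0: "phi \<ge> 0" unfolding phi_def using alpha_pos bpos gamma by simp
  define v where "v = P *v B"
  define Mg where "Mg = Q + phi *\<^sub>R outer v v"
  define g where "g = gfun phi Q v"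
  have g_eq: "g = lambda_min Mg" unfolding g_def gfun_def Mg_def ..
  define c1 where "c1 = W \<bullet> (matrix_inv Kb *v W)"
  define D where "D = (c1 + \<eta>s\<^sup>2 / (b * (1 - \<gamma>))) / \<alpha>"
  define lmin where "lmin = lambda_min P"
  define lmax where "lmax = lambda_max P"
  have symP: "sym_mat P" using P_pd pos_def_def by blast
  have symQ: "sym_mat Q" using Q_pd pos_def_def by blast
  have symK: "sym_mat Kb" using Kb_pd pos_def_def by blast
  have lmin: "lmin > 0" "\<forall>y. lmin * (y \<bullet> y) \<le> y \<bullet> (P *v y)"
    using lambda_min_prop[OF symP] pos_eig[OF P_pd] unfolding lmin_def by auto
  have lmax: "lmax > 0" "\<forall>y. y \<bullet> (P *v y) \<le> lmax * (y \<bullet> y)"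
    using lambda_max_prop[OF symP] pos_eig[OF P_pd] unfolding lmax_def by auto
  have symMg: "sym_mat Mg" unfolding Mg_def by (rule sym_Mg[OF symQ])
  have Mg_form: "y \<bullet> (Mg *v y) = y \<bullet> (Q *v y) + phi * (v \<bullet> y)^2" for y
    unfolding Mg_def matrix_vector_mult_add_rdistrib mat_scale outer_mult
    by (simp add: inner_add_right power2_eq_square inner_commute)
  have pdMg: "pos_def Mg" unfolding pos_def_def
  proof (intro conjI symMg allI impI)
    fix y :: "real^'n" assume "y \<noteq> 0"
    then have "y \<bullet> (Q *v y) > 0" using Q_pd unfolding pos_def_def by blast
    moreover have "phi * (v \<bullet> y)^2 \<ge> 0" using phi0 by simp
    ultimately show "y \<bullet> (Mg *v y) > 0" unfolding Mg_form by linarith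
  qed
  have gp: "g > 0" "\<forall>y. g * (y \<bullet> y) \<le> y \<bullet> (Mg *v y)"
    using lambda_min_prop[OF symMg] pos_eig[OF pdMg] unfolding g_eq by auto
  define y0 where "y0 = matrix_inv Kb *v W"
  have Ky0: "Kb *v y0 = W" unfolding y0_def by (rule inv_mult[OF Kb_pd])
  have c1_nn: "c1 \<ge> 0"
  proof -
    have "c1 = y0 \<bullet> (Kb *v y0)" unfolding c1_def y0_def[symmetric] Ky0 by (simp add: inner_commute)
    then show ?thesis using pos_nonneg[OF Kb_pd] by simp
  qed
  have D_nn: "D \<ge> 0" unfolding D_def using c1_nn alpha_pos bpos gamma by simp
  define V where "V t = e t \<bullet> (P *v e t)" for t
  define E where "E t = A *v e t + (u t + W \<bullet> \<beta> (e t) + \<eta> t) *\<^sub>R B" for t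
  define Vd where "Vd t = 2 * (e t \<bullet> (P *v E t))" for t
  have der: "\<forall>t\<ge>0. (V has_field_derivative Vd t) (at t within {0..})"
  proof (intro allI impI)
    fix t :: real assume t: "t \<ge> 0"
    have "(e has_vector_derivative E t) (at t within {0..})"
      unfolding E_def using sol t by blast
    then have d1: "(e has_derivative (\<lambda>h. h *\<^sub>R E t)) (at t within {0..})"
      unfolding has_vector_derivative_def .
    have d2: "((\<lambda>s. P *v e s) has_derivative (\<lambda>h. P *v (h *\<^sub>R E t))) (at t within {0..})"
      by (rule bounded_linear.has_derivative[OF matrix_vector_mul_bounded_linear d1])
    note d3 = has_derivative_inner[OF d1 d2]
    have eq: "(\<lambda>h. e t \<bullet> (P *v (h *\<^sub>R E t)) + (h *\<^sub>R E t) \<bullet> (P *v e t)) = (*) (Vd t)"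
    proof
      fix h
      have "(E t) \<bullet> (P *v e t) = e t \<bullet> (P *v E t)"
        using sym_inner[OF symP, of "e t" "E t"] by (simp add: inner_commute)
      then show "e t \<bullet> (P *v (h *\<^sub>R E t)) + (h *\<^sub>R E t) \<bullet> (P *v e t) = Vd t * h"
        unfolding Vd_def by (simp add: matrix_vector_mult_scaleR algebra_simps)
    qed
    show "(V has_field_derivative Vd t) (at t within {0..})"
      unfolding has_field_derivative_def V_def
      using has_derivative_eq_rhs[OF d3 eq] by simp
  qed
  have bound: "Vd t \<le> - g * (e t \<bullet> e t) + D" if t: "t \<ge> 0" for t
  proof -
    define x where "x = e t"
    define bb where "bb = \<beta> x"
    define s where "s = B \<bullet> (P *v x)"
    define k where "k = bb \<bullet> (Kb *v bb)"
    define w where "w = u t + W \<bullet> bb + \<eta> t"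
    have bk: "b \<le> k"
    proof -
      have "bdd_below (range (\<lambda>x. \<beta> x \<bullet> (Kb *v \<beta> x)))"
        using pos_nonneg[OF Kb_pd] by (intro bdd_belowI[of _ 0]) auto
      then show ?thesis unfolding b_def k_def bb_def by (rule cINF_lower) simp
    qed
    have kpos: "k > 0" using bk bpos by simp
    have u_eq: "u t = - (\<alpha> * s * k)"
      using control update t unfolding s_def k_def bb_def x_def
      by (simp add: mat_scale inner_commute)
    have vx: "v \<bullet> x = s" unfolding v_def s_def
      using sym_inner[OF symP, of x B] by (simp add: inner_commute)
    have xPB: "x \<bullet> (P *v B) = s" using vx unfolding v_def by (simp add: inner_commute)
    have Vd_eq: "Vd t = 2 * (x \<bullet> (P *v (A *v x))) + 2 * w * s"
    proof -
      have "P *v E t = P *v (A *v x) + w *\<^sub>R (P *v B)"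
        unfolding E_def x_def[symmetric] bb_def[symmetric] w_def[symmetric]
        by (simp only: matrix_vector_right_distrib matrix_vector_mult_scaleR)
      then have "e t \<bullet> (P *v E t) = x \<bullet> (P *v (A *v x)) + w * s"
        unfolding x_def[symmetric] by (simp only: inner_add_right inner_scaleR_right xPB)
      then show ?thesis unfolding Vd_def by (simp add: algebra_simps)
    qed
    have "2 * (x \<bullet> (P *v (A *v x))) = - (x \<bullet> (Q *v x))" using lyap_id[OF symP lyap, of x] by simp
    also have "\<dots> = - (x \<bullet> (Mg *v x)) + phi * s^2" using Mg_form[of x] vx by simp
    also have "\<dots> \<le> - g * (x \<bullet> x) + phi * s^2"
    proof -
      have "g * (x \<bullet> x) \<le> x \<bullet> (Mg *v x)" using gp(2) by blast
      then show ?thesis by linarith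
    qed
    finally have step1: "Vd t \<le> - g * (x \<bullet> x) + phi * s^2 + 2 * w * s" using Vd_eq by simp
    have young1: "- \<alpha> * k * s^2 + 2 * s * (W \<bullet> bb) \<le> c1 / \<alpha>"
    proof -
      define z where "z = (\<alpha> * s) *\<^sub>R bb - y0"
      have "0 \<le> z \<bullet> (Kb *v z)" by (rule pos_nonneg[OF Kb_pd])
      also have "z \<bullet> (Kb *v z) = (\<alpha> * s)^2 * k - 2 * (\<alpha> * s) * (W \<bullet> bb) + c1"
      proof -
        have a1: "bb \<bullet> (Kb *v y0) = W \<bullet> bb" using Ky0 by (simp add: inner_commute)
        have a2: "y0 \<bullet> (Kb *v bb) = W \<bullet> bb" using sym_inner[OF symK, of y0 bb] Ky0 by simp
        have a3: "y0 \<bullet> (Kb *v y0) = c1" unfolding c1_def y0_def[symmetric] Ky0 by (simp add: inner_commute)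
        show ?thesis unfolding z_def
          by (simp add: matrix_vector_mult_diff_distrib matrix_vector_mult_scaleR inner_diff_left
              inner_diff_right a1 a2 a3 k_def[symmetric] power2_eq_square algebra_simps)
      qed
      finally have "0 \<le> (\<alpha> * s)^2 * k - 2 * (\<alpha> * s) * (W \<bullet> bb) + c1" .
      then have "0 \<le> (\<alpha> * k * s^2 - 2 * s * (W \<bullet> bb)) * \<alpha> + c1"
        by (simp add: power2_eq_square algebra_simps)
      then have "- (\<alpha> * k * s^2 - 2 * s * (W \<bullet> bb)) * \<alpha> \<le> c1" by linarith
      then show ?thesis using alpha_pos by (simp add: pos_le_divide_eq)
    qed
    define a where "a = \<alpha> * (1 - \<gamma>) * k"
    have apos: "a > 0" unfolding a_def using alpha_pos gamma kpos by simp
    have young2: "- a * s^2 + 2 * s * \<eta> t \<le> (\<eta> t)^2 / a"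
    proof -
      have "0 \<le> (a * s - \<eta> t)^2 / a" using apos by simp
      also have "(a * s - \<eta> t)^2 / a = a * s^2 - 2 * s * \<eta> t + (\<eta> t)^2 / a"
        using apos by (simp add: field_simps power2_eq_square)
      finally show ?thesis by simp
    qed
    have eta2: "(\<eta> t)^2 \<le> \<eta>s^2"
    proof -
      have "\<bar>\<eta> t\<bar> \<le> \<eta>s" using eta_bd t by simp
      then have "\<bar>\<eta> t\<bar>^2 \<le> \<eta>s^2" by (intro power_mono) auto
      then show ?thesis by simp
    qed
    have young3: "(\<eta> t)^2 / a \<le> \<eta>s^2 / (b * (1 - \<gamma>)) / \<alpha>"
    proof -
      have "\<alpha> * (1 - \<gamma>) * b \<le> a" unfolding a_def using bk alpha_pos gamma by simp
      moreover have "0 < \<alpha> * (1 - \<gamma>) * b" using alpha_pos gamma bpos by simp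
      ultimately have "(\<eta> t)^2 / a \<le> (\<eta> t)^2 / (\<alpha> * (1 - \<gamma>) * b)"
        by (intro divide_left_mono) auto
      also have "\<dots> \<le> \<eta>s^2 / (\<alpha> * (1 - \<gamma>) * b)"
        using eta2 \<open>0 < \<alpha> * (1 - \<gamma>) * b\<close> by (intro divide_right_mono) auto
      also have "\<dots> = \<eta>s^2 / (b * (1 - \<gamma>)) / \<alpha>" by (simp add: mult_ac)
      finally show ?thesis .
    qed
    have phik: "phi * s^2 \<le> \<alpha> * \<gamma> * k * s^2"
    proof -
      have "b * \<gamma> \<le> k * \<gamma>" using bk gamma(1) by (rule mult_right_mono)
      then have "\<alpha> * (b * \<gamma>) \<le> \<alpha> * (k * \<gamma>)" using alpha_pos by (intro mult_left_mono) auto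
      then have "phi \<le> \<alpha> * \<gamma> * k" by (simp add: phi_def mult_ac)
      then show ?thesis by (intro mult_right_mono) auto
    qed
    have "phi * s^2 + 2 * w * s
        \<le> (- \<alpha> * k * s^2 + 2 * s * (W \<bullet> bb)) + (- a * s^2 + 2 * s * \<eta> t)"
      using phik unfolding w_def u_eq a_def by (simp add: algebra_simps power2_eq_square)
    also have "\<dots> \<le> D" using young1 young2 young3 unfolding D_def by (simp add: add_divide_distrib)
    finally show ?thesis using step1 unfolding x_def by simp
  qed
  define Vs where "Vs = lmax * (D + \<mu>) / g"
  have dec: "\<forall>t\<ge>0. V t > Vs \<longrightarrow> Vd t \<le> - \<mu>"
  proof (intro allI impI)
    fix t :: real assume t: "t \<ge> 0" and big: "V t > Vs"
    have "V t \<le> lmax * (e t \<bullet> e t)" using lmax(2) unfolding V_def by blast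
    then have "lmax * (D + \<mu>) / g < lmax * (e t \<bullet> e t)" using big Vs_def by simp
    then have "lmax * ((D + \<mu>) / g) < lmax * (e t \<bullet> e t)" by simp
    then have "(D + \<mu>) / g < e t \<bullet> e t" using lmax(1) mult_less_cancel_left_pos by blast
    then have "D + \<mu> < g * (e t \<bullet> e t)" using gp(1) by (simp add: divide_less_eq mult.commute)
    then show "Vd t \<le> - \<mu>" using bound[OF t] by linarith
  qed
  obtain T where T: "T \<ge> 0" "\<forall>t\<ge>T. V t \<le> Vs" using comparison[OF der dec mu] by blast
  define r where "r = sqrt (lmax / (g * lmin)) * sqrt (D + \<mu>)"
  have fin: "norm (e t) \<le> r" if "t \<ge> T" for t
  proof -
    have "lmin * (e t \<bullet> e t) \<le> Vs" using lmin(2) T that unfolding V_def by (meson order.trans)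
    then have "e t \<bullet> e t \<le> Vs / lmin" using lmin(1) by (simp add: le_divide_eq mult.commute)
    also have "Vs / lmin = lmax / (g * lmin) * (D + \<mu>)" unfolding Vs_def by simp
    finally have "sqrt (e t \<bullet> e t) \<le> sqrt (lmax / (g * lmin) * (D + \<mu>))" by (rule real_sqrt_le_mono)
    also have "sqrt (lmax / (g * lmin) * (D + \<mu>)) = r" unfolding r_def by (rule real_sqrt_mult)
    finally show ?thesis by (simp add: norm_eq_sqrt_inner)
  qed
  have "\<exists>Te\<ge>0. \<forall>t\<ge>Te. norm (e t) \<le> r" using T fin by blast
  then show ?thesis
    unfolding Let_def b_def[symmetric] r_def D_def c1_def g_def phi_def v_def lmin_def lmax_def .
qed


end
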